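(* For each $N\ge2$ let $(\nu_r^{(1:N)})_{r\ge1}$ be random vectors of non-negative integers with $\sum_i\nu_r^{(i)}=N$, and assume that for all real $0 \le s < u$, $$\lim_{N\to\infty}\mathbb{E}\Bigg[\sum_{r=\tau_N(s)+1}^{\tau_N(u)} c_N(r)^2\Bigg] = 0.$$ Fix $k\in\mathbb{N}$, times $0=t_0\le t_1\le\cdots\le t_k\le t$, and strictly positive constants $K_1,\dots,K_k$. Define $$E_N := \bigcap_{j=1}^k\Bigg\{\sum_{s=\tau_N(t_{j-1})+1}^{\tau_N(t_j)} c_N(s)^2 \le K_j\Bigg\}.$$ Then $\lim_{N\to\infty}\mathbb{P}[E_N]=1$.
   Context: $(x)_k$ is the falling factorial; $c_N(r) := \frac{1}{(N)_2}\sum_i(\nu_r^{(i)})_2$; $\tau_N(u) := \inf\{s\in\{0,1,2,\dots\}: \sum_{r=1}^s c_N(r)\ge u\}$ (so $\tau_N(0)=0$); sums with upper limit below lower limit are $0$. *)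

theory Defs
  imports "HOL-Probability.Probability"
begin

definition ff2 :: "nat \<Rightarrow> real" where
  "ff2 x = real x * (real x - 1)"

definition cN :: "nat \<Rightarrow> (nat \<Rightarrow> nat) \<Rightarrow> real" where
  "cN N v = (\<Sum>i=1..N. ff2 (v i)) / ff2 N"

definition tau :: "(nat \<Rightarrow> real) \<Rightarrow> real \<Rightarrow> enat" where
  "tau c u = (if \<exists>s. (\<Sum>r=1..s. c r) \<ge> u then enat (LEAST s. (\<Sum>r=1..s. c r) \<ge> u) else \<infinity>)"

definition sqsum :: "(nat \<Rightarrow> real) \<Rightarrow> enat \<Rightarrow> enat \<Rightarrow> ennreal" where
  "sqsum c a b = (\<Sum>r. if a < enat r \<and> enat r \<le> b then ennreal ((c r)\<^sup>2) else 0)"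

end

theory Submission
  imports Defs
begin

lemma tau_enat_iff:
  "tau c u = enat n \<longleftrightarrow> (\<Sum>r=1..n. c r) \<ge> u \<and> (\<forall>m<n. (\<Sum>r=1..m. c r) < u)"
proof
  assume h: "tau c u = enat n"
  then have ex: "\<exists>s. (\<Sum>r=1..s. c r) \<ge> u" unfolding tau_def by (auto split: if_splits)
  with h have n: "n = (LEAST s. (\<Sum>r=1..s. c r) \<ge> u)" unfolding tau_def by auto
  show "(\<Sum>r=1..n. c r) \<ge> u \<and> (\<forall>m<n. (\<Sum>r=1..m. c r) < u)"
    using ex n by (metis (mono_tags, lifting) LeastI_ex not_less_Least not_le)
next
  assume h: "(\<Sum>r=1..n. c r) \<ge> u \<and> (\<forall>m<n. (\<Sum>r=1..m. c r) < u)"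
  then have "(LEAST s. (\<Sum>r=1..s. c r) \<ge> u) = n"
    by (intro Least_equality) (auto simp: not_less[symmetric])
  with h show "tau c u = enat n" unfolding tau_def by auto
qed

lemma tau_inf_iff: "tau c u = \<infinity> \<longleftrightarrow> (\<forall>s. (\<Sum>r=1..s. c r) < u)"
  unfolding tau_def by (auto simp: not_le) (meson not_le)

lemma tau_meas:
  assumes "\<And>r. r \<ge> 1 \<Longrightarrow> (\<lambda>\<omega>. C \<omega> r) \<in> borel_measurable M"
  shows "(\<lambda>\<omega>. tau (C \<omega>) u) \<in> M \<rightarrow>\<^sub>M count_space UNIV"
proof -
  have S: "(\<lambda>\<omega>. (\<Sum>r=1..n. C \<omega> r)) \<in> borel_measurable M" for n
    using assms by (intro borel_measurable_sum) auto
  show ?thesis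
    unfolding measurable_count_space_eq2_countable
  proof (intro conjI ballI)
    fix a :: enat
    show "(\<lambda>\<omega>. tau (C \<omega>) u) -` {a} \<inter> space M \<in> sets M"
    proof (cases a)
      case (enat n)
      have "(\<lambda>\<omega>. tau (C \<omega>) u) -` {a} \<inter> space M =
        {\<omega>\<in>space M. (\<Sum>r=1..n. C \<omega> r) \<ge> u \<and> (\<forall>m\<in>{..<n}. (\<Sum>r=1..m. C \<omega> r) < u)}"
        using enat by (auto simp: tau_enat_iff)
      also have "\<dots> \<in> sets M" using S by measurable
      finally show ?thesis .
    next
      case infinity
      have "(\<lambda>\<omega>. tau (C \<omega>) u) -` {a} \<inter> space M =
        {\<omega>\<in>space M. \<forall>s. (\<Sum>r=1..s. C \<omega> r) < u}"
        using infinity by (auto simp: tau_inf_iff)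
      also have "\<dots> \<in> sets M" using S by measurable
      finally show ?thesis .
    qed
  qed auto
qed

lemma sqsum_meas:
  assumes "\<And>r. r \<ge> 1 \<Longrightarrow> (\<lambda>\<omega>. C \<omega> r) \<in> borel_measurable M"
    and A: "A \<in> M \<rightarrow>\<^sub>M count_space UNIV" and B: "B \<in> M \<rightarrow>\<^sub>M count_space UNIV"
  shows "(\<lambda>\<omega>. sqsum (C \<omega>) (A \<omega>) (B \<omega>)) \<in> borel_measurable M"
  unfolding sqsum_def
proof (rule borel_measurable_suminf_order)
  fix r
  show "(\<lambda>\<omega>. if A \<omega> < enat r \<and> enat r \<le> B \<omega> then ennreal ((C \<omega> r)\<^sup>2) else 0) \<in> borel_measurable M"
  proof (cases "r = 0")
    case True
    then show ?thesis by (simp add: enat_0)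
  next
    case False
    have P: "{\<omega> \<in> space M. A \<omega> < enat r \<and> enat r \<le> B \<omega>} \<in> sets M"
    proof -
      have "(\<lambda>\<omega>. A \<omega> < enat r \<and> enat r \<le> B \<omega>) \<in> M \<rightarrow>\<^sub>M count_space UNIV"
        using measurable_compose[OF measurable_Pair[OF A B], of "\<lambda>(x,y). x < enat r \<and> enat r \<le> y" "count_space UNIV"]
        by (simp add: pair_measure_countable)
      then show ?thesis by (simp add: pred_def[symmetric])
    qed
    show ?thesis
    proof (rule measurable_If[OF _ _ P])
      have "(\<lambda>\<omega>. C \<omega> r) \<in> borel_measurable M" using False assms(1)[of r] by auto
      then show "(\<lambda>\<omega>. ennreal ((C \<omega> r)\<^sup>2)) \<in> borel_measurable M" by measurable
    qed auto
  qed
qed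

theorem lemma15:
  fixes M :: "nat \<Rightarrow> 'a measure"
    and nu :: "nat \<Rightarrow> 'a \<Rightarrow> nat \<Rightarrow> nat \<Rightarrow> nat"
    and k :: nat and t :: "nat \<Rightarrow> real" and T :: real and K :: "nat \<Rightarrow> real"
  defines "c \<equiv> (\<lambda>N \<omega> r. cN N (nu N \<omega> r))"
  assumes prob: "\<And>N. N \<ge> 2 \<Longrightarrow> prob_space (M N)"
    and meas: "\<And>N r i. N \<ge> 2 \<Longrightarrow> r \<ge> 1 \<Longrightarrow> i \<in> {1..N} \<Longrightarrow>
                 (\<lambda>\<omega>. nu N \<omega> r i) \<in> measurable (M N) (count_space UNIV)"
    and total: "\<And>N r \<omega>. N \<ge> 2 \<Longrightarrow> r \<ge> 1 \<Longrightarrow> \<omega> \<in> space (M N) \<Longrightarrow>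
                 (\<Sum>i=1..N. nu N \<omega> r i) = N"
    and hyp: "\<And>s u. 0 \<le> s \<Longrightarrow> s < u \<Longrightarrow>
                 (\<lambda>N. \<integral>\<^sup>+ \<omega>. sqsum (c N \<omega>) (tau (c N \<omega>) s) (tau (c N \<omega>) u) \<partial>M N)
                   \<longlonglongrightarrow> 0"
    and t0: "t 0 = 0"
    and tmono: "\<And>j. j \<in> {1..k} \<Longrightarrow> t (j - 1) \<le> t j"
    and tk: "t k \<le> T"
    and Kpos: "\<And>j. j \<in> {1..k} \<Longrightarrow> K j > 0"
  shows "(\<lambda>N. measure (M N) {\<omega> \<in> space (M N). \<forall>j\<in>{1..k}.
            sqsum (c N \<omega>) (tau (c N \<omega>) (t (j - 1))) (tau (c N \<omega>) (t j)) \<le> ennreal (K j)})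
         \<longlonglongrightarrow> 1"
proof -
  have tnn: "i \<le> k \<Longrightarrow> 0 \<le> t i" for i
  proof (induction i)
    case 0 then show ?case using t0 by simp
  next
    case (Suc i) then show ?case using tmono[of "Suc i"] by auto
  qed
  have cmeas: "(\<lambda>\<omega>. c N \<omega> r) \<in> borel_measurable (M N)" if "N \<ge> 2" "r \<ge> 1" for N r
  proof -
    have "(\<lambda>\<omega>. ff2 (nu N \<omega> r i)) \<in> borel_measurable (M N)" if "i \<in> {1..N}" for i
      using measurable_compose[OF meas[OF \<open>N \<ge> 2\<close> \<open>r \<ge> 1\<close> that], of ff2 borel]
      by (simp add: measurable_count_space)
    then have "(\<lambda>\<omega>. (\<Sum>i=1..N. ff2 (nu N \<omega> r i)) / ff2 N) \<in> borel_measurable (M N)"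
      by (intro borel_measurable_divide borel_measurable_sum) auto
    then show ?thesis unfolding c_def cN_def .
  qed
  define X where "X = (\<lambda>N j \<omega>. sqsum (c N \<omega>) (tau (c N \<omega>) (t (j - 1))) (tau (c N \<omega>) (t j)))"
  define A where "A = (\<lambda>N j. {\<omega>\<in>space (M N). \<not> X N j \<omega> \<le> ennreal (K j)})"
  define E where "E = (\<lambda>N. {\<omega> \<in> space (M N). \<forall>j\<in>{1..k}. X N j \<omega> \<le> ennreal (K j)})"
  have Xmeas: "X N j \<in> borel_measurable (M N)" if "N \<ge> 2" for N j
    unfolding X_def
    by (intro sqsum_meas tau_meas cmeas that) auto
  have Ameas: "A N j \<in> sets (M N)" if "N \<ge> 2" for N j
    using Xmeas[OF that, of j] unfolding A_def by measurable
  have Emeas: "E N \<in> sets (M N)" if "N \<ge> 2" for N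
    using Xmeas[OF that] unfolding E_def by measurable
  have compl: "space (M N) - E N = (\<Union>j\<in>{1..k}. A N j)" for N
    unfolding A_def E_def by auto
  have step1: "(\<lambda>N. emeasure (M N) (A N j)) \<longlonglongrightarrow> 0" if j: "j \<in> {1..k}" for j
  proof (cases "t (j - 1) < t j")
    case False
    then have "t (j - 1) = t j" using tmono[OF j] by auto
    then have "X N j \<omega> = 0" for N \<omega> unfolding X_def sqsum_def
      by (simp add: not_le[symmetric])
    then have "A N j = {}" for N unfolding A_def by auto
    then show ?thesis by simp
  next
    case True
    have s0: "0 \<le> t (j - 1)" using tnn[of "j - 1"] j by auto
    have lim: "(\<lambda>N. ennreal (1 / K j) * integral\<^sup>N (M N) (X N j)) \<longlonglongrightarrow> ennreal (1 / K j) * 0"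
      using hyp[OF s0 True] unfolding X_def
      by (intro ennreal_tendsto_cmult) auto
    have bound: "emeasure (M N) (A N j) \<le> ennreal (1 / K j) * integral\<^sup>N (M N) (X N j)"
      if N: "N \<ge> 2" for N
    proof -
      have Kp: "K j > 0" using Kpos[OF j] .
      have "ennreal (K j) * emeasure (M N) (A N j) = (\<integral>\<^sup>+ \<omega>. ennreal (K j) * indicator (A N j) \<omega> \<partial>M N)"
        using Ameas[OF N] by (simp add: nn_integral_cmult_indicator)
      also have "\<dots> \<le> integral\<^sup>N (M N) (X N j)"
        by (intro nn_integral_mono) (auto simp: A_def indicator_def)
      finally have h: "ennreal (K j) * emeasure (M N) (A N j) \<le> integral\<^sup>N (M N) (X N j)" .
      have one: "ennreal (1 / K j) * ennreal (K j) = 1"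
        using Kp by (simp add: ennreal_mult[symmetric])
      have "emeasure (M N) (A N j) = ennreal (1 / K j) * (ennreal (K j) * emeasure (M N) (A N j))"
        by (simp add: mult.assoc[symmetric] one)
      also have "\<dots> \<le> ennreal (1 / K j) * integral\<^sup>N (M N) (X N j)"
        using h by (intro mult_left_mono) auto
      finally show ?thesis .
    qed
    show ?thesis
    proof (rule tendsto_sandwich[OF _ _ tendsto_const])
      show "\<forall>\<^sub>F N in sequentially. 0 \<le> emeasure (M N) (A N j)" by simp
      show "\<forall>\<^sub>F N in sequentially. emeasure (M N) (A N j) \<le> ennreal (1 / K j) * integral\<^sup>N (M N) (X N j)"
        using bound eventually_sequentially by blast
      show "(\<lambda>N. ennreal (1 / K j) * integral\<^sup>N (M N) (X N j)) \<longlonglongrightarrow> 0"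
        using lim by simp
    qed
  qed
  have step2: "(\<lambda>N. \<Sum>j\<in>{1..k}. emeasure (M N) (A N j)) \<longlonglongrightarrow> 0"
    using tendsto_sum[of "{1..k}" "\<lambda>j N. emeasure (M N) (A N j)" "\<lambda>_. 0" sequentially] step1
    by simp
  have step3: "(\<lambda>N. emeasure (M N) (space (M N) - E N)) \<longlonglongrightarrow> 0"
  proof (rule tendsto_sandwich[OF _ _ tendsto_const step2])
    show "\<forall>\<^sub>F N in sequentially. 0 \<le> emeasure (M N) (space (M N) - E N)" by simp
    have "emeasure (M N) (space (M N) - E N) \<le> (\<Sum>j\<in>{1..k}. emeasure (M N) (A N j))" if "N \<ge> 2" for N
      unfolding compl using Ameas[OF that] by (intro emeasure_subadditive_finite) auto
    then show "\<forall>\<^sub>F N in sequentially. emeasure (M N) (space (M N) - E N) \<le> (\<Sum>j\<in>{1..k}. emeasure (M N) (A N j))"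
      using eventually_sequentially by blast
  qed
  have step4: "(\<lambda>N. enn2real (emeasure (M N) (space (M N) - E N))) \<longlonglongrightarrow> 0"
    using step3 by (intro tendsto_enn2real) auto
  have ev: "\<forall>\<^sub>F N in sequentially. 1 - enn2real (emeasure (M N) (space (M N) - E N)) = measure (M N) (E N)"
  proof -
    have "1 - enn2real (emeasure (M N) (space (M N) - E N)) = measure (M N) (E N)" if "N \<ge> 2" for N
    proof -
      interpret prob_space "M N" using prob[OF that] .
      show ?thesis using prob_compl[OF Emeas[OF that]] by (simp add: measure_def)
    qed
    then show ?thesis using eventually_sequentially by blast
  qed
  have "(\<lambda>N. 1 - enn2real (emeasure (M N) (space (M N) - E N))) \<longlonglongrightarrow> 1 - 0"
    by (intro tendsto_diff tendsto_const step4)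
  then have "(\<lambda>N. measure (M N) (E N)) \<longlonglongrightarrow> 1"
    using tendsto_cong[OF ev] by simp
  then show ?thesis unfolding E_def X_def .
qed

end
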